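(* For every integer $n\ge 1$, $$\Phi^{(1)}[aq^n; b, b'; c; x, y] = \Phi^{(1)}[a; b, b'; c; x, y] + \frac{ax(1-b)}{1-c} \sum_{k=1}^n q^{k-1} \Phi^{(1)}[aq^k; bq, b'; cq; x, y] + \frac{ay(1-b')}{1-c} \sum_{k=1}^n q^{k-1} \Phi^{(1)}[aq^k; b, b'q; cq; xq, y]$$ and $$\Phi^{(1)}[aq^{-n}; b, b'; c; x, y] = \Phi^{(1)}[a; b, b'; c; x, y] - \frac{ax(1-b)}{1-c} \sum_{k=1}^n q^{-k} \Phi^{(1)}[aq^{1-k}; bq, b'; cq; x, y] - \frac{ay(1-b')}{1-c} \sum_{k=1}^n q^{-k} \Phi^{(1)}[aq^{1-k}; b, b'q; cq; xq, y].$$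
   Context: Let $q$ be a complex number with $0<|q|<1$. For complex $z$ and integer $m\ge 0$, $(z;q)_m=\prod_{j=0}^{m-1}(1-zq^j)$, with $(z;q)_0=1$. The $q$-Appell function $\Phi^{(1)}$ is $$\Phi^{(1)}[a; b, b'; c; x, y] = \sum_{m, n \geq 0} \frac{(a; q)_{m+n} (b; q)_m (b'; q)_n}{(q; q)_m (q; q)_n (c; q)_{m+n}} x^m y^n.$$ Identities are understood as identities of power series in $x,y$ (formal, or convergent for small $|x|,|y|$), with complex parameters $a,b,b',c$ chosen so that no denominator occurring vanishes. *)

theory Defs
  imports "HOL-Analysis.Analysis"
begin

definition qpoch :: "complex \<Rightarrow> complex \<Rightarrow> nat \<Rightarrow> complex" where
  "qpoch z q m = (\<Prod>j<m. 1 - z * q ^ j)"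

definition appell1_term ::
  "complex \<Rightarrow> complex \<Rightarrow> complex \<Rightarrow> complex \<Rightarrow> complex \<Rightarrow> complex \<Rightarrow> complex \<Rightarrow> nat \<times> nat \<Rightarrow> complex" where
  "appell1_term q a b b' c x y mn =
     (case mn of (m, n) \<Rightarrow>
        qpoch a q (m + n) * qpoch b q m * qpoch b' q n
        / (qpoch q q m * qpoch q q n * qpoch c q (m + n)) * x ^ m * y ^ n)"

definition appell1 ::
  "complex \<Rightarrow> complex \<Rightarrow> complex \<Rightarrow> complex \<Rightarrow> complex \<Rightarrow> complex \<Rightarrow> complex \<Rightarrow> complex" where
  "appell1 q a b b' c x y = (\<Sum>\<^sub>\<infinity> mn \<in> UNIV. appell1_term q a b b' c x y mn)"

end

theory Submission
  imports Defs
begin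

lemma prod_one_minus_ge:
  fixes t :: "nat \<Rightarrow> real"
  assumes "finite A" "\<And>j. 0 \<le> t j" "\<And>j. t j \<le> 1"
  shows "(\<Prod>j\<in>A. 1 - t j) \<ge> 1 - (\<Sum>j\<in>A. t j)"
  using assms(1)
proof (induction A rule: finite_induct)
  case empty then show ?case by simp
next
  case (insert x F)
  have S: "0 \<le> (\<Sum>j\<in>F. t j)" using assms(2) by (simp add: sum_nonneg)
  have "(\<Prod>j\<in>insert x F. 1 - t j) = (1 - t x) * (\<Prod>j\<in>F. 1 - t j)" using insert by simp
  also have "\<dots> \<ge> (1 - t x) * (1 - (\<Sum>j\<in>F. t j))"
    using insert.IH assms(3)[of x] by (intro mult_left_mono) auto
  finally have "(\<Prod>j\<in>insert x F. 1 - t j) \<ge> (1 - t x) * (1 - (\<Sum>j\<in>F. t j))" .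
  moreover have "(1 - t x) * (1 - (\<Sum>j\<in>F. t j)) \<ge> 1 - (t x + (\<Sum>j\<in>F. t j))"
    using S assms(2)[of x] by (simp add: algebra_simps)
  ultimately show ?case using insert by simp
qed

lemma qpoch_Suc: "qpoch z q (Suc m) = qpoch z q m * (1 - z * q ^ m)"
  by (simp add: qpoch_def)

lemma qpoch_Suc': "qpoch z q (Suc m) = (1 - z) * qpoch (z * q) q m"
  unfolding qpoch_def by (subst prod.lessThan_Suc_shift) (simp add: mult.assoc)

lemma qpoch_add: "qpoch z q (m + p) = qpoch z q m * qpoch (z * q ^ m) q p"
  by (induction p) (simp_all add: qpoch_def power_add mult.assoc mult_ac)

lemma qpoch_nonzero:
  assumes "\<And>j. z * q ^ j \<noteq> 1" shows "qpoch z q m \<noteq> 0"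
  using assms by (auto simp: qpoch_def)

lemma qpoch_norm_le:
  assumes "norm q < 1"
  shows "norm (qpoch z q m) \<le> exp (norm z / (1 - norm q))"
proof -
  have "norm (qpoch z q m) \<le> (\<Prod>j<m. 1 + norm z * norm q ^ j)"
    unfolding qpoch_def prod_norm[symmetric]
    by (intro prod_mono) (auto simp: norm_mult norm_power intro: order.trans[OF norm_triangle_ineq4])
  also have "\<dots> \<le> (\<Prod>j<m. exp (norm z * norm q ^ j))"
    by (intro prod_mono) (auto simp: exp_ge_add_one_self)
  also have "\<dots> = exp (\<Sum>j<m. norm z * norm q ^ j)" by (simp add: exp_sum)
  also have "(\<Sum>j<m. norm z * norm q ^ j) \<le> (\<Sum>j. norm z * norm q ^ j)"
    using assms by (intro sum_le_suminf) (auto intro!: summable_mult summable_geometric)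
  also have "(\<Sum>j. norm z * norm q ^ j) = norm z / (1 - norm q)"
    using assms by (simp add: suminf_mult suminf_geometric)
  finally show ?thesis by simp
qed

lemma qpoch_norm_ge:
  assumes "norm q < 1" "norm w \<le> 1"
  shows "norm (qpoch w q p) \<ge> 1 - norm w / (1 - norm q)"
proof -
  have "(\<Sum>j<p. norm w * norm q ^ j) \<le> (\<Sum>j. norm w * norm q ^ j)"
    using assms by (intro sum_le_suminf) (auto intro!: summable_mult summable_geometric)
  also have "(\<Sum>j. norm w * norm q ^ j) = norm w / (1 - norm q)"
    using assms by (simp add: suminf_mult suminf_geometric)
  finally have 1: "(\<Sum>j<p. norm w * norm q ^ j) \<le> norm w / (1 - norm q)" .
  have t1: "norm w * norm q ^ j \<le> 1" for j
    using assms by (intro mult_le_one power_le_one) auto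
  have 2: "(\<Prod>j<p. 1 - norm w * norm q ^ j) \<ge> 1 - (\<Sum>j<p. norm w * norm q ^ j)"
    using t1 by (intro prod_one_minus_ge) auto
  have "(\<Prod>j<p. 1 - norm w * norm q ^ j) \<le> norm (qpoch w q p)"
    unfolding qpoch_def prod_norm[symmetric]
  proof (intro prod_mono conjI)
    fix j show "0 \<le> 1 - norm w * norm q ^ j" using t1[of j] by simp
    have "norm (1::complex) - norm (w * q ^ j) \<le> norm (1 - w * q ^ j)" by (rule norm_triangle_ineq2)
    then show "1 - norm w * norm q ^ j \<le> norm (1 - w * q ^ j)" by (simp add: norm_mult norm_power)
  qed
  then show ?thesis using 1 2 by linarith
qed

lemma qpoch_lower:
  assumes q: "norm q < 1" and z: "\<And>j. z * q ^ j \<noteq> 1"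
  shows "\<exists>\<delta>>0. \<forall>m. \<delta> \<le> norm (qpoch z q m)"
proof -
  define r where "r = norm q"
  have r: "0 \<le> r" "r < 1" using q by (auto simp: r_def)
  have "\<exists>J. r ^ J < (1 - r) / (2 * (norm z + 1))"
    using r by (intro real_arch_pow_inv) (auto intro!: divide_pos_pos add_nonneg_pos)
  then obtain J where J: "r ^ J < (1 - r) / (2 * (norm z + 1))" by blast
  have nzJ: "norm (z * q ^ J) \<le> (1 - r) / 2"
  proof -
    have "norm (z * q ^ J) = norm z * r ^ J" by (simp add: norm_mult norm_power r_def)
    also have "\<dots> \<le> (norm z + 1) * r ^ J" using r by (intro mult_right_mono) auto
    also have "\<dots> \<le> (norm z + 1) * ((1 - r) / (2 * (norm z + 1)))"
      using J by (intro mult_left_mono) auto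
    also have "\<dots> = (1 - r) / 2"
    proof -
      have n0: "norm z + 1 \<noteq> 0" by (metis add_nonneg_pos norm_ge_zero zero_less_one less_irrefl)
      then show ?thesis by (simp add: field_simps)
    qed
    finally show ?thesis .
  qed
  define S where "S = (\<lambda>m. norm (qpoch z q m)) ` {..J}"
  have Sfin: "finite S" "S \<noteq> {}" by (auto simp: S_def)
  have Spos: "\<forall>s\<in>S. 0 < s" using qpoch_nonzero[OF z] by (auto simp: S_def)
  define \<mu> where "\<mu> = Min S"
  have mupos: "0 < \<mu>" using Sfin Spos by (simp add: \<mu>_def Min_gr_iff)
  have mule: "\<mu> \<le> norm (qpoch z q m)" if "m \<le> J" for m
    unfolding \<mu>_def using Sfin that by (intro Min_le) (auto simp: S_def)
  show ?thesis
  proof (intro exI[of _ "\<mu> / 2"] conjI allI)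
    show "0 < \<mu> / 2" using mupos by simp
    fix m
    show "\<mu> / 2 \<le> norm (qpoch z q m)"
    proof (cases "m \<le> J")
      case True then show ?thesis using mule[of m] mupos by simp
    next
      case False
      then obtain p where p: "m = J + p" by (metis le_add_diff_inverse nat_le_linear)
      have w1: "norm (z * q ^ J) \<le> 1" using nzJ r by simp
      have "1 - norm (z * q ^ J) / (1 - r) \<le> norm (qpoch (z * q ^ J) q p)"
        using qpoch_norm_ge[OF q w1, of p] by (simp add: r_def)
      moreover have "norm (z * q ^ J) / (1 - r) \<le> 1 / 2"
        using nzJ r by (simp add: field_simps)
      ultimately have h: "1 / 2 \<le> norm (qpoch (z * q ^ J) q p)" by linarith
      have "\<mu> / 2 \<le> norm (qpoch z q J) * (1/2)" using mule[of J] by simp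
      also have "\<dots> \<le> norm (qpoch z q J) * norm (qpoch (z * q ^ J) q p)"
        using h by (intro mult_left_mono) auto
      also have "\<dots> = norm (qpoch z q m)" by (simp add: p qpoch_add norm_mult)
      finally show ?thesis .
    qed
  qed
qed

lemma geom2_summable:
  fixes X Y :: real
  assumes "0 \<le> X" "X < 1" "0 \<le> Y" "Y < 1"
  shows "(\<lambda>(m,n). X ^ m * Y ^ n) summable_on UNIV"
proof -
  have "(\<lambda>(m,n). X ^ m * Y ^ n) summable_on Sigma UNIV (\<lambda>_. UNIV)"
  proof (rule summable_on_SigmaI)
    fix m :: nat
    show "((\<lambda>n. (\<lambda>(m,n). X ^ m * Y ^ n) (m, n)) has_sum (X ^ m * (1 / (1 - Y)))) UNIV"
    proof (intro sums_nonneg_imp_has_sum)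
      show "(\<lambda>n. (\<lambda>(m,n). X ^ m * Y ^ n) (m, n)) sums (X ^ m * (1 / (1 - Y)))"
        using sums_mult[OF geometric_sums[of Y], of "X^m"] assms by simp
    qed (use assms in auto)
  next
    show "(\<lambda>m. X ^ m * (1 / (1 - Y))) summable_on UNIV"
      using assms by (auto intro!: summable_nonneg_imp_summable_on summable_mult2 summable_geometric)
  qed (use assms in auto)
  then show ?thesis by simp
qed

lemma appell1_term_summable:
  fixes q a b b' c x y :: complex
  assumes q: "0 < norm q" "norm q < 1" and c: "\<And>j. c * q ^ j \<noteq> 1"
    and x: "norm x < 1" and y: "norm y < 1"
  shows "appell1_term q a b b' c x y summable_on UNIV"
proof -
  have qq: "q * q ^ j \<noteq> 1" for j
  proof
    assume "q * q ^ j = 1"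
    then have "norm q ^ Suc j = 1" by (metis norm_one norm_power power_Suc)
    moreover have "norm q ^ Suc j < 1" using q by (intro power_Suc_less_one) auto
    ultimately show False by simp
  qed
  obtain dq where dq: "dq > 0" "\<And>m. dq \<le> norm (qpoch q q m)" using qpoch_lower[OF q(2) qq] by blast
  obtain dc where dc: "dc > 0" "\<And>m. dc \<le> norm (qpoch c q m)" using qpoch_lower[OF q(2) c] by blast
  define U where "U = (\<lambda>z::complex. exp (norm z / (1 - norm q)))"
  define C where "C = U a * U b * U b' / (dq * dq * dc)"
  have bound: "norm (appell1_term q a b b' c x y (m, n)) \<le> C * (norm x ^ m * norm y ^ n)" for m n
  proof -
    have num: "norm (qpoch a q (m + n) * qpoch b q m * qpoch b' q n) \<le> U a * U b * U b'"
      unfolding norm_mult U_def using q(2)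
      by (intro mult_mono qpoch_norm_le) (auto)
    have den: "dq * dq * dc \<le> norm (qpoch q q m * qpoch q q n * qpoch c q (m + n))"
      unfolding norm_mult using dq dc by (intro mult_mono) auto
    have "norm (appell1_term q a b b' c x y (m, n)) =
      norm (qpoch a q (m + n) * qpoch b q m * qpoch b' q n) /
      norm (qpoch q q m * qpoch q q n * qpoch c q (m + n)) * (norm x ^ m * norm y ^ n)"
      by (simp add: appell1_term_def norm_mult norm_divide norm_power)
    also have "\<dots> \<le> (U a * U b * U b') / (dq * dq * dc) * (norm x ^ m * norm y ^ n)"
      using num den dq dc by (intro mult_right_mono frac_le) (auto simp: U_def)
    finally show ?thesis by (simp add: C_def)
  qed
  have "(\<lambda>mn. C * (case mn of (m,n) \<Rightarrow> norm x ^ m * norm y ^ n)) summable_on UNIV"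
    using geom2_summable[of "norm x" "norm y"] x y
    by (intro summable_on_cmult_right) (auto simp: case_prod_unfold)
  then have "(\<lambda>mn. norm (appell1_term q a b b' c x y mn)) summable_on UNIV"
    by (rule summable_on_comparison_test) (auto simp: bound case_prod_unfold)
  then show ?thesis by (simp add: summable_on_iff_abs_summable_on_complex)
qed

lemma qq_nonzero:
  fixes q :: complex assumes "norm q < 1" shows "qpoch q q m \<noteq> 0"
proof (rule qpoch_nonzero)
  fix j :: nat show "q * q ^ j \<noteq> 1"
  proof
    assume "q * q ^ j = 1"
    then have "norm q ^ Suc j = 1" by (metis norm_one norm_power power_Suc)
    moreover have "norm q ^ Suc j < 1"
    proof (cases "q = 0")
      case True then show ?thesis by simp
    next
      case False then show ?thesis using assms by (intro power_Suc_less_one) auto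
    qed
    ultimately show False by simp
  qed
qed

lemma aux1:
  fixes a t P B1 Bq B2 Q1 Q2 C1 CQ x x1 y1 :: complex
  assumes "1 - t \<noteq> 0" "Q1 \<noteq> 0" "Q2 \<noteq> 0" "1 - C1 \<noteq> 0" "CQ \<noteq> 0"
  shows "a*(1 - t)*(P*((1-B1)*Bq)*B2/(Q1*(1-t)*Q2*((1-C1)*CQ))*(x*x1)*y1) = a*x*(1-B1)/(1-C1)*(P*Bq*B2/(Q1*Q2*CQ)*x1*y1)"
proof -
  define D where "D = Q1*Q2*CQ*(1-C1)"
  have D: "D \<noteq> 0" using assms by (simp add: D_def)
  have "Q1*(1-t)*Q2*((1-C1)*CQ) = (1-t)*D" by (simp add: D_def algebra_simps)
  then have "a*(1 - t)*(P*((1-B1)*Bq)*B2/(Q1*(1-t)*Q2*((1-C1)*CQ))*(x*x1)*y1) = a*(P*((1-B1)*Bq)*B2/D*(x*x1)*y1)"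
    using assms(1) by simp
  also have "\<dots> = a*x*(1-B1)/(1-C1)*(P*Bq*B2/(Q1*Q2*CQ)*x1*y1)"
    unfolding D_def by (simp add: algebra_simps)
  finally show ?thesis .
qed
lemma aux2:
  fixes a t P B B1 B2 Q1 Q2 C1 CQ x1 u y y1 :: complex
  assumes "1 - t \<noteq> 0" "Q1 \<noteq> 0" "Q2 \<noteq> 0" "1 - C1 \<noteq> 0" "CQ \<noteq> 0"
  shows "a*(u*(1 - t))*(P*B*((1-B1)*B2)/(Q1*(Q2*(1-t))*((1-C1)*CQ))*x1*(y*y1)) = a*y*(1-B1)/(1-C1)*(P*B*B2/(Q1*Q2*CQ)*(x1*u)*y1)"
proof -
  define D where "D = Q1*Q2*CQ*(1-C1)"
  have "Q1*(Q2*(1-t))*((1-C1)*CQ) = (1-t)*D" by (simp add: D_def algebra_simps)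
  then have "a*(u*(1 - t))*(P*B*((1-B1)*B2)/(Q1*(Q2*(1-t))*((1-C1)*CQ))*x1*(y*y1)) = a*u*(P*B*((1-B1)*B2)/D*x1*(y*y1))"
    using assms(1) by simp
  also have "\<dots> = a*y*(1-B1)/(1-C1)*(P*B*B2/(Q1*Q2*CQ)*(x1*u)*y1)"
    unfolding D_def by (simp add: algebra_simps)
  finally show ?thesis .
qed

lemma term_step:
  fixes q a b b' c x y :: complex
  assumes q: "norm q < 1" and c: "\<And>j. c * q ^ j \<noteq> 1"
  shows "appell1_term q (a*q) b b' c x y (m,n) = appell1_term q a b b' c x y (m,n)
     + (if m = 0 then 0 else a*x*(1-b)/(1-c) * appell1_term q (a*q) (b*q) b' (c*q) x y (m - 1, n))
     + (if n = 0 then 0 else a*y*(1-b')/(1-c) * appell1_term q (a*q) b (b'*q) (c*q) (x*q) y (m, n - 1))"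
proof (cases "m + n = 0")
  case True then show ?thesis by (simp add: appell1_term_def qpoch_def)
next
  case False
  then obtain M where M: "m + n = Suc M" by (metis not0_implies_Suc)
  have c1: "1 - c \<noteq> 0" using c[of 0] by simp
  have cq: "qpoch (c*q) q M \<noteq> 0"
    by (rule qpoch_nonzero) (metis c mult.assoc power_Suc)
  have qm: "qpoch q q k \<noteq> 0" for k using qq_nonzero[OF q] .
  define P where "P = qpoch (a*q) q M"
  have F1: "qpoch (a*q) q (m+n) - qpoch a q (m+n) = a*(1 - q^m*q^n) * P"
  proof -
    have 1: "qpoch (a*q) q (Suc M) = P * (1 - a*q*q^M)" by (simp add: qpoch_Suc P_def)
    have 2: "qpoch a q (Suc M) = (1-a)*P" by (simp add: qpoch_Suc' P_def)
    have 3: "q^m*q^n = q*q^M" using M by (metis power_Suc power_add)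
    show ?thesis unfolding M 1 2 3 by (simp add: algebra_simps)
  qed
  have F2: "qpoch c q (m+n) = (1-c) * qpoch (c*q) q M"
    unfolding M qpoch_Suc' ..
  define Q where "Q = P*qpoch b q m * qpoch b' q n / (qpoch q q m * qpoch q q n * ((1-c) * qpoch (c*q) q M)) * x^m * y^n"
  define P1 where "P1 = a*(1-q^m)*Q"
  define P2 where "P2 = a*(q^m*(1-q^n))*Q"
  have diff: "appell1_term q (a*q) b b' c x y (m,n) - appell1_term q a b b' c x y (m,n) = P1 + P2"
  proof -
    have "appell1_term q (a*q) b b' c x y (m,n) - appell1_term q a b b' c x y (m,n)
      = (qpoch (a*q) q (m+n) - qpoch a q (m+n)) * qpoch b q m * qpoch b' q n / (qpoch q q m * qpoch q q n * qpoch c q (m + n)) * x^m * y^n"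
      by (simp add: appell1_term_def algebra_simps diff_divide_distrib)
    also have "\<dots> = a*(1 - q^m*q^n) * Q" unfolding F1 F2 Q_def by simp
    also have "\<dots> = P1 + P2" unfolding P1_def P2_def by (simp add: algebra_simps)
    finally show ?thesis .
  qed
  have E1: "P1 = (if m = 0 then 0 else a*x*(1-b)/(1-c) * appell1_term q (a*q) (b*q) b' (c*q) x y (m - 1, n))"
  proof (cases m)
    case 0 then show ?thesis by (simp add: P1_def)
  next
    case (Suc i)
    have Mi: "M = i + n" using M Suc by simp
    have qs: "1 - q * q ^ i \<noteq> 0" using qm[of "Suc i"] by (simp add: qpoch_Suc)
    have e: "qpoch q q (Suc i) = qpoch q q i * (1 - q*q^i)"
      "q^Suc i = q*q^i" "x^Suc i = x*x^i" by (simp_all add: qpoch_Suc)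
    have e2: "qpoch b q (Suc i) = (1-b)*qpoch (b*q) q i" by (rule qpoch_Suc')
    have R: "(if Suc i = 0 then 0 else a*x*(1-b)/(1-c) * appell1_term q (a*q) (b*q) b' (c*q) x y (Suc i - 1, n))
      = a*x*(1-b)/(1-c) * (qpoch (a*q) q (i+n) * qpoch (b*q) q i * qpoch b' q n / (qpoch q q i * qpoch q q n * qpoch (c*q) q (i+n)) * x^i * y^n)"
      by (simp add: appell1_term_def)
    show ?thesis unfolding P1_def Q_def Suc Mi P_def R e e2
      by (rule aux1) (use qs qm[of i] qm[of n] c1 cq[unfolded Mi] in auto)
  qed
  have E2: "P2 = (if n = 0 then 0 else a*y*(1-b')/(1-c) * appell1_term q (a*q) b (b'*q) (c*q) (x*q) y (m, n - 1))"
  proof (cases n)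
    case 0 then show ?thesis by (simp add: P2_def)
  next
    case (Suc j)
    have Mj: "M = m + j" using M Suc by simp
    have qs: "1 - q * q ^ j \<noteq> 0" using qm[of "Suc j"] by (simp add: qpoch_Suc)
    have e: "qpoch q q (Suc j) = qpoch q q j * (1 - q*q^j)"
      "q^Suc j = q*q^j" "y^Suc j = y*y^j" by (simp_all add: qpoch_Suc)
    have e2: "qpoch b' q (Suc j) = (1-b')*qpoch (b'*q) q j" by (rule qpoch_Suc')
    have R: "(if Suc j = 0 then 0 else a*y*(1-b')/(1-c) * appell1_term q (a*q) b (b'*q) (c*q) (x*q) y (m, Suc j - 1))
      = a*y*(1-b')/(1-c) * (qpoch (a*q) q (m+j) * qpoch b q m * qpoch (b'*q) q j / (qpoch q q m * qpoch q q j * qpoch (c*q) q (m+j)) * (x^m*q^m) * y^j)"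
      by (simp add: appell1_term_def power_mult_distrib)
    show ?thesis unfolding P2_def Q_def Suc Mj P_def R e e2
      by (rule aux2) (use qs qm[of j] qm[of m] c1 cq[unfolded Mj] in auto)
  qed
  show ?thesis using diff E1 E2 by (simp add: algebra_simps)
qed


lemma shift_has_sum:
  fixes g :: "nat \<times> nat \<Rightarrow> complex"
  assumes "(g has_sum S) UNIV"
  shows "((\<lambda>(m,n). if m = 0 then 0 else K * g (m - 1, n)) has_sum (K * S)) UNIV"
    and "((\<lambda>(m,n). if n = 0 then 0 else K * g (m, n - 1)) has_sum (K * S)) UNIV"
proof -
  have gK: "((\<lambda>mn. K * g mn) has_sum (K * S)) UNIV" using assms by (rule has_sum_cmult_right)
  define h1 where "h1 = (\<lambda>(m::nat,n::nat). (Suc m, n))"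
  have inj1: "inj_on h1 UNIV" by (auto simp: h1_def inj_on_def)
  have "(((\<lambda>(m,n). if m = 0 then 0 else K * g (m - 1, n)) \<circ> h1) has_sum (K * S)) UNIV"
    using gK by (simp add: h1_def comp_def case_prod_unfold)
  then have "((\<lambda>(m,n). if m = 0 then 0 else K * g (m - 1, n)) has_sum (K * S)) (h1 ` UNIV)"
    using has_sum_reindex[OF inj1] by blast
  moreover have "x \<notin> h1 ` UNIV \<Longrightarrow> (\<lambda>(m,n). if m = 0 then 0 else K * g (m - 1, n)) x = 0" for x
    by (cases x; case_tac a) (auto simp: h1_def)
  ultimately show "((\<lambda>(m,n). if m = 0 then 0 else K * g (m - 1, n)) has_sum (K * S)) UNIV"
    by (subst (asm) has_sum_cong_neutral[where T = UNIV]) auto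
  define h2 where "h2 = (\<lambda>(m::nat,n::nat). (m, Suc n))"
  have inj2: "inj_on h2 UNIV" by (auto simp: h2_def inj_on_def)
  have "(((\<lambda>(m,n). if n = 0 then 0 else K * g (m, n - 1)) \<circ> h2) has_sum (K * S)) UNIV"
    using gK by (simp add: h2_def comp_def case_prod_unfold)
  then have "((\<lambda>(m,n). if n = 0 then 0 else K * g (m, n - 1)) has_sum (K * S)) (h2 ` UNIV)"
    using has_sum_reindex[OF inj2] by blast
  moreover have "x \<notin> h2 ` UNIV \<Longrightarrow> (\<lambda>(m,n). if n = 0 then 0 else K * g (m, n - 1)) x = 0" for x
    by (cases x; case_tac b) (auto simp: h2_def)
  ultimately show "((\<lambda>(m,n). if n = 0 then 0 else K * g (m, n - 1)) has_sum (K * S)) UNIV"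
    by (subst (asm) has_sum_cong_neutral[where T = UNIV]) auto
qed

lemma appell_step:
  fixes q a b b' c x y :: complex
  assumes q: "0 < norm q" "norm q < 1" and c: "\<And>j. c * q ^ j \<noteq> 1"
    and x: "norm x < 1" and y: "norm y < 1"
  shows "appell1 q (a*q) b b' c x y = appell1 q a b b' c x y
     + a * (x*(1-b)/(1-c) * appell1 q (a*q) (b*q) b' (c*q) x y)
     + a * (y*(1-b')/(1-c) * appell1 q (a*q) b (b'*q) (c*q) (x*q) y)"
proof -
  have cq: "(c*q) * q ^ j \<noteq> 1" for j by (metis c mult.assoc power_Suc)
  have xq: "norm (x*q) < 1" using x q by (auto simp: norm_mult intro: mult_strict_mono[of "norm x" 1 "norm q" 1, simplified])
  define K1 where "K1 = a*x*(1-b)/(1-c)"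
  define K2 where "K2 = a*y*(1-b')/(1-c)"
  define t1 where "t1 = appell1_term q (a*q) (b*q) b' (c*q) x y"
  define t2 where "t2 = appell1_term q (a*q) b (b'*q) (c*q) (x*q) y"
  have h0: "(appell1_term q a b b' c x y has_sum appell1 q a b b' c x y) UNIV"
    unfolding appell1_def using appell1_term_summable[OF q c x y] by (rule has_sum_infsum)
  have h1: "(t1 has_sum appell1 q (a*q) (b*q) b' (c*q) x y) UNIV"
    unfolding appell1_def t1_def using appell1_term_summable[OF q cq x y] by (rule has_sum_infsum)
  have h2: "(t2 has_sum appell1 q (a*q) b (b'*q) (c*q) (x*q) y) UNIV"
    unfolding appell1_def t2_def using appell1_term_summable[OF q cq xq y] by (rule has_sum_infsum)
  have "((\<lambda>mn. appell1_term q a b b' c x y mn + (\<lambda>(m,n). if m = 0 then 0 else K1 * t1 (m - 1, n)) mn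
          + (\<lambda>(m,n). if n = 0 then 0 else K2 * t2 (m, n - 1)) mn)
     has_sum (appell1 q a b b' c x y + K1 * appell1 q (a*q) (b*q) b' (c*q) x y + K2 * appell1 q (a*q) b (b'*q) (c*q) (x*q) y)) UNIV"
    by (intro has_sum_add h0 shift_has_sum h1 h2)
  also have "(\<lambda>mn. appell1_term q a b b' c x y mn + (\<lambda>(m,n). if m = 0 then 0 else K1 * t1 (m - 1, n)) mn
          + (\<lambda>(m,n). if n = 0 then 0 else K2 * t2 (m, n - 1)) mn) = appell1_term q (a*q) b b' c x y"
  proof
    fix mn :: "nat \<times> nat" obtain m n where "mn = (m,n)" by fastforce
    then show "appell1_term q a b b' c x y mn + (\<lambda>(m,n). if m = 0 then 0 else K1 * t1 (m - 1, n)) mn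
          + (\<lambda>(m,n). if n = 0 then 0 else K2 * t2 (m, n - 1)) mn = appell1_term q (a*q) b b' c x y mn"
      using term_step[OF q(2) c, of a b b' x y m n] by (simp add: K1_def K2_def t1_def t2_def)
  qed
  finally have "(appell1_term q (a*q) b b' c x y has_sum (appell1 q a b b' c x y + K1 * appell1 q (a*q) (b*q) b' (c*q) x y + K2 * appell1 q (a*q) b (b'*q) (c*q) (x*q) y)) UNIV" .
  then have "appell1 q (a*q) b b' c x y = appell1 q a b b' c x y + K1 * appell1 q (a*q) (b*q) b' (c*q) x y + K2 * appell1 q (a*q) b (b'*q) (c*q) (x*q) y"
    unfolding appell1_def by (rule infsumI)
  then show ?thesis by (simp add: K1_def K2_def mult.assoc)
qed


theorem theorem1:
  fixes q a b b' c x y :: complex and n :: nat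
  assumes hq: "0 < norm q" "norm q < 1"
    and hc: "\<And>j::nat. c * q ^ j \<noteq> 1"
    and hx: "norm x < 1" and hy: "norm y < 1"
    and hn: "n \<ge> 1"
  shows "appell1 q (a * q ^ n) b b' c x y =
           appell1 q a b b' c x y
           + a * x * (1 - b) / (1 - c) * (\<Sum>k=1..n. q ^ (k - 1) * appell1 q (a * q ^ k) (b * q) b' (c * q) x y)
           + a * y * (1 - b') / (1 - c) * (\<Sum>k=1..n. q ^ (k - 1) * appell1 q (a * q ^ k) b (b' * q) (c * q) (x * q) y)
       \<and> appell1 q (a * q powi (- int n)) b b' c x y =
           appell1 q a b b' c x y
           - a * x * (1 - b) / (1 - c) * (\<Sum>k=1..n. q powi (- int k) * appell1 q (a * q powi (1 - int k)) (b * q) b' (c * q) x y)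
           - a * y * (1 - b') / (1 - c) * (\<Sum>k=1..n. q powi (- int k) * appell1 q (a * q powi (1 - int k)) b (b' * q) (c * q) (x * q) y)"
proof -
  define F where "F = (\<lambda>z. appell1 q z b b' c x y)"
  define G where "G = (\<lambda>z. x*(1-b)/(1-c) * appell1 q z (b*q) b' (c*q) x y)"
  define H where "H = (\<lambda>z. y*(1-b')/(1-c) * appell1 q z b (b'*q) (c*q) (x*q) y)"
  have step: "F (z*q) = F z + z * G (z*q) + z * H (z*q)" for z
    unfolding F_def G_def H_def by (rule appell_step[OF hq hc hx hy])
  have q0: "q \<noteq> 0" using hq by auto
  have P1: "F (a*q^N) = F a + (\<Sum>k=1..N. a*q^(k-1)*(G (a*q^k) + H (a*q^k)))" for N
  proof (induction N)
    case 0 then show ?case by simp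
  next
    case (Suc N)
    have "F (a*q^Suc N) = F (a*q^N*q)" by (simp add: mult_ac)
    also have "\<dots> = F (a*q^N) + a*q^N * (G (a*q^Suc N) + H (a*q^Suc N))"
    proof -
      have e: "a*q^N*q = a*q^Suc N" by (simp add: mult_ac)
      show ?thesis using step[of "a*q^N"] unfolding e by (simp add: distrib_left)
    qed
    finally show ?case using Suc by (simp add: sum.cl_ivl_Suc)
  qed
  have P2: "F (a*q powi (- int N)) = F a - (\<Sum>k=1..N. a*q powi (- int k)*(G (a*q powi (1 - int k)) + H (a*q powi (1 - int k))))" for N
  proof (induction N)
    case 0 then show ?case by simp
  next
    case (Suc N)
    have e1: "a*q powi (- int (Suc N)) * q = a*q powi (- int N)"
    proof -
      have "q powi (- int (Suc N)) * q = q powi (- int (Suc N) + 1)"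
        by (simp only: power_int_add[OF disjI1[OF q0]] power_int_1_right)
      also have "- int (Suc N) + 1 = - int N" by simp
      finally show ?thesis by (simp add: mult.assoc)
    qed
    have e2: "a*q powi (1 - int (Suc N)) = a*q powi (- int N)" by simp
    have "F (a*q powi (- int N)) = F (a*q powi (- int (Suc N))) + a*q powi (- int (Suc N)) * (G (a*q powi (1 - int (Suc N))) + H (a*q powi (1 - int (Suc N))))"
      using step[of "a*q powi (- int (Suc N))"] unfolding e1 e2 by (simp add: distrib_left)
    then show ?case using Suc by (simp add: sum.cl_ivl_Suc algebra_simps)
  qed
  have S1: "a * x * (1 - b) / (1 - c) * (\<Sum>k=1..n. q ^ (k - 1) * appell1 q (a * q ^ k) (b * q) b' (c * q) x y)
     + a * y * (1 - b') / (1 - c) * (\<Sum>k=1..n. q ^ (k - 1) * appell1 q (a * q ^ k) b (b' * q) (c * q) (x * q) y)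
     = (\<Sum>k=1..n. a*q^(k-1)*(G (a*q^k) + H (a*q^k)))"
    unfolding sum_distrib_left sum.distrib[symmetric] G_def H_def
    by (intro sum.cong refl) (simp add: algebra_simps)
  have S2: "a * x * (1 - b) / (1 - c) * (\<Sum>k=1..n. q powi (- int k) * appell1 q (a * q powi (1 - int k)) (b * q) b' (c * q) x y)
     + a * y * (1 - b') / (1 - c) * (\<Sum>k=1..n. q powi (- int k) * appell1 q (a * q powi (1 - int k)) b (b' * q) (c * q) (x * q) y)
     = (\<Sum>k=1..n. a*q powi (- int k)*(G (a*q powi (1 - int k)) + H (a*q powi (1 - int k))))"
    unfolding sum_distrib_left sum.distrib[symmetric] G_def H_def
    by (intro sum.cong refl) (simp add: algebra_simps)
  show ?thesis
    using P1[of n] P2[of n] S1 S2 unfolding F_def by (simp add: algebra_simps)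
qed

end
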